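(* Let $G(A,B)$ be a matching-covered bipartite graph. Then $G(A,B)$ has an equivalent class if and only if $G(A,B)$ has a 2-edge-cut which separates $G(A,B)$ into two balanced components.
   Context: A matching-covered graph is a connected graph with a perfect matching in which every edge lies in some perfect matching. Two edges of a matching-covered graph $G$ are equivalent if every perfect matching of $G$ either contains both of them or contains neither. An equivalent class of $G$ is a set $K\subseteq E(G)$ with at least two edges such that any two edges of $K$ are equivalent. A 2-edge-cut separating $G$ into two components is a set $S$ of two edges such that $G\setminus S$ has exactly two components and $S$ consists of the edges between them. A bipartite component with bipartition $(A',B')$ is balanced if $|A'|=|B'|$. *)

theory Defs
  imports Main
begin

definition simple_graph :: "'a set \<Rightarrow> 'a set set \<Rightarrow> bool" where
  "simple_graph V E \<longleftrightarrow> finite V \<and>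
     (\<forall>e\<in>E. \<exists>u v. e = {u, v} \<and> u \<noteq> v \<and> u \<in> V \<and> v \<in> V)"

definition adj :: "'a set set \<Rightarrow> 'a \<Rightarrow> 'a \<Rightarrow> bool" where
  "adj E u v \<longleftrightarrow> {u, v} \<in> E"

definition connected_graph :: "'a set \<Rightarrow> 'a set set \<Rightarrow> bool" where
  "connected_graph V E \<longleftrightarrow> V \<noteq> {} \<and> (\<forall>u\<in>V. \<forall>v\<in>V. (adj E)\<^sup>*\<^sup>* u v)"

definition is_component :: "'a set \<Rightarrow> 'a set set \<Rightarrow> 'a set \<Rightarrow> bool" where
  "is_component V F X \<longleftrightarrow> X \<subseteq> V \<and> connected_graph X {e\<in>F. e \<subseteq> X} \<and>
     (\<forall>e\<in>F. e \<inter> X \<noteq> {} \<longrightarrow> e \<subseteq> X)"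

definition perfect_matching :: "'a set \<Rightarrow> 'a set set \<Rightarrow> 'a set set \<Rightarrow> bool" where
  "perfect_matching V E M \<longleftrightarrow> M \<subseteq> E \<and> (\<forall>v\<in>V. \<exists>!e. e \<in> M \<and> v \<in> e)"

definition matching_covered :: "'a set \<Rightarrow> 'a set set \<Rightarrow> bool" where
  "matching_covered V E \<longleftrightarrow> connected_graph V E \<and> (\<exists>M. perfect_matching V E M) \<and>
     (\<forall>e\<in>E. \<exists>M. perfect_matching V E M \<and> e \<in> M)"

definition bipartite_with :: "'a set \<Rightarrow> 'a set set \<Rightarrow> 'a set \<Rightarrow> 'a set \<Rightarrow> bool" where
  "bipartite_with V E A B \<longleftrightarrow> A \<inter> B = {} \<and> A \<union> B = V \<and>
     (\<forall>e\<in>E. card (e \<inter> A) = 1 \<and> card (e \<inter> B) = 1)"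

definition equivalent_edges :: "'a set \<Rightarrow> 'a set set \<Rightarrow> 'a set \<Rightarrow> 'a set \<Rightarrow> bool" where
  "equivalent_edges V E e f \<longleftrightarrow> (\<forall>M. perfect_matching V E M \<longrightarrow> (e \<in> M \<longleftrightarrow> f \<in> M))"

definition equivalent_class :: "'a set \<Rightarrow> 'a set set \<Rightarrow> 'a set set \<Rightarrow> bool" where
  "equivalent_class V E K \<longleftrightarrow> K \<subseteq> E \<and> card K \<ge> 2 \<and>
     (\<forall>e\<in>K. \<forall>f\<in>K. equivalent_edges V E e f)"

definition two_edge_cut_sep :: "'a set \<Rightarrow> 'a set set \<Rightarrow> 'a set set \<Rightarrow> 'a set \<Rightarrow> 'a set \<Rightarrow> bool" where
  "two_edge_cut_sep V E S X Y \<longleftrightarrow> S \<subseteq> E \<and> card S = 2 \<and> X \<noteq> Y \<and>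
     {Z. is_component V (E - S) Z} = {X, Y} \<and>
     S = {e\<in>E. e \<inter> X \<noteq> {} \<and> e \<inter> Y \<noteq> {}}"

definition balanced :: "'a set \<Rightarrow> 'a set \<Rightarrow> 'a set \<Rightarrow> bool" where
  "balanced A B X \<longleftrightarrow> card (X \<inter> A) = card (X \<inter> B)"

end

theory Submission
  imports Defs
begin

definition crossing :: "'a set set \<Rightarrow> 'a set \<Rightarrow> 'a set set" where
  "crossing E W = {h\<in>E. h \<inter> W \<noteq> {} \<and> h - W \<noteq> {}}"

definition mate :: "'a set set \<Rightarrow> 'a \<Rightarrow> 'a" where
  "mate M v = (THE u. {v, u} \<in> M)"

lemma comp_reach:
  assumes "is_component V F X" "x \<in> X" "y \<in> X"
  shows "(adj {e\<in>F. e \<subseteq> X})\<^sup>*\<^sup>* x y"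
  using assms by (auto simp: is_component_def connected_graph_def)

lemma comp_eq:
  assumes X: "is_component V F X" and Y: "is_component V F Y" and x: "x \<in> X" "x \<in> Y"
  shows "X = Y"
proof -
  have sub: "X \<subseteq> Y" if X: "is_component V F X" and Y: "is_component V F Y" and x: "x \<in> X" "x \<in> Y"
    for X Y
  proof
    fix v assume v: "v \<in> X"
    have "(adj {e\<in>F. e \<subseteq> X})\<^sup>*\<^sup>* x v" using comp_reach[OF X x(1) v] .
    then show "v \<in> Y"
    proof (induction rule: rtranclp_induct)
      case base then show ?case using x by simp
    next
      case (step y z)
      then have "{y,z} \<in> F" by (simp add: adj_def)
      then show ?case using step Y by (auto simp: is_component_def)
    qed
  qed
  show ?thesis using sub[OF X Y x] sub[OF Y X x(2) x(1)] by blast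
qed

lemma comp_disj:
  assumes "is_component V F X" "is_component V F Y" "X \<noteq> Y" shows "X \<inter> Y = {}"
  using comp_eq[OF assms(1,2)] assms(3) by blast

lemma adj_sym: "adj G u v \<Longrightarrow> adj G v u" by (simp add: adj_def insert_commute)

lemma rtranclp_adj_sym: "(adj G)\<^sup>*\<^sup>* u v \<Longrightarrow> (adj G)\<^sup>*\<^sup>* v u"
proof (induction rule: rtranclp_induct)
  case base then show ?case by simp
next
  case (step y z)
  then show ?case by (meson adj_sym converse_rtranclp_into_rtranclp)
qed

primrec layer :: "'a set set \<Rightarrow> ('a \<Rightarrow> 'a) \<Rightarrow> 'a \<Rightarrow> 'a \<Rightarrow> 'a \<Rightarrow> nat \<Rightarrow> 'a set" where
  "layer E m a1 a2 b1 0 = {b1}"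
| "layer E m a1 a2 b1 (Suc k) = layer E m a1 a2 b1 k \<union>
     {m a | a. \<exists>b\<in>layer E m a1 a2 b1 k. {b,a} \<in> E \<and> a \<noteq> a1 \<and> a \<noteq> a2}"

locale mcb =
  fixes V :: "'a set" and E :: "'a set set" and A B :: "'a set"
  assumes sg: "simple_graph V E" and bip: "bipartite_with V E A B"
    and mc: "matching_covered V E"
begin

lemma finV: "finite V" using sg by (simp add: simple_graph_def)
lemma AB_disj: "A \<inter> B = {}" and AB_V: "A \<union> B = V"
  using bip by (auto simp: bipartite_with_def)
lemma finA: "finite A" and finB: "finite B" using finV AB_V
  by (metis finite_Un)+

lemma edge2: "h \<in> E \<Longrightarrow> \<exists>u v. h = {u,v} \<and> u \<noteq> v \<and> u \<in> V \<and> v \<in> V"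
  using sg by (simp add: simple_graph_def)

lemma edge_sub: "h \<in> E \<Longrightarrow> h \<subseteq> V" using edge2 by blast

lemma edgeAB: assumes "h \<in> E" shows "\<exists>a b. h = {a,b} \<and> a \<in> A \<and> b \<in> B"
proof -
  obtain u v where h: "h = {u,v}" "u \<noteq> v" "u \<in> V" "v \<in> V" using edge2[OF assms] by blast
  have cA: "card (h \<inter> A) = 1" and cB: "card (h \<inter> B) = 1"
    using bip assms by (auto simp: bipartite_with_def)
  show ?thesis
  proof (cases "u \<in> A")
    case True
    then have "v \<notin> A" using cA h by (auto simp: card_insert_if split: if_splits)
    then have "v \<in> B" using h AB_V by auto
    then show ?thesis using True h by blast
  next
    case False
    then have "u \<in> B" using h AB_V by auto
    then have "v \<notin> B" using cB h by (auto simp: card_insert_if split: if_splits)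
    then have "v \<in> A" using h AB_V by auto
    then show ?thesis using \<open>u \<in> B\<close> h by blast
  qed
qed

lemma conn: "connected_graph V E" using mc by (simp add: matching_covered_def)

lemma closed_conn:
  assumes "W \<subseteq> V" "W \<noteq> {}" "crossing E W = {}" shows "W = V"
proof -
  obtain u where u: "u \<in> W" using assms by blast
  have "v \<in> W" if "v \<in> V" for v
  proof -
    have "(adj E)\<^sup>*\<^sup>* u v" using conn u assms that by (auto simp: connected_graph_def)
    then show ?thesis
    proof (induction rule: rtranclp_induct)
      case base then show ?case using u .
    next
      case (step y z)
      then have "{y,z} \<in> E" by (simp add: adj_def)
      then show ?case using step assms(3) by (auto simp: crossing_def)
    qed
  qed
  then show ?thesis using assms by blast
qed

lemma pm_mate:
  assumes pm: "perfect_matching V E M" and v: "v \<in> V"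
  shows "{v, mate M v} \<in> M"
proof -
  obtain g where g: "g \<in> M" "v \<in> g" and uq: "\<And>g'. g' \<in> M \<Longrightarrow> v \<in> g' \<Longrightarrow> g' = g"
    using pm v unfolding perfect_matching_def by blast
  have "g \<in> E" using g pm by (auto simp: perfect_matching_def)
  then obtain x y where xy: "g = {x,y}" "x \<noteq> y" using edge2 by blast
  then obtain u where u: "g = {v,u}" "u \<noteq> v" using g by auto
  have "(THE u. {v,u} \<in> M) = u"
  proof (rule the_equality)
    show "{v,u} \<in> M" using u g by simp
    fix w assume "{v,w} \<in> M"
    then have "{v,w} = {v,u}" using uq u by auto
    then show "w = u" using u by (auto simp: doubleton_eq_iff)
  qed
  then show ?thesis using u g by (simp add: mate_def)
qed

lemma pm_mate_eq:
  assumes pm: "perfect_matching V E M" and vu: "{v,u} \<in> M"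
  shows "mate M v = u"
proof -
  have "{v,u} \<in> E" using vu pm by (auto simp: perfect_matching_def)
  then have v: "v \<in> V" and uv: "u \<noteq> v" using edge2 by (fastforce simp: doubleton_eq_iff)+
  have m: "{v, mate M v} \<in> M" using pm_mate[OF pm v] .
  obtain g where "g \<in> M" "v \<in> g" and uq: "\<And>g'. g' \<in> M \<Longrightarrow> v \<in> g' \<Longrightarrow> g' = g"
    using pm v unfolding perfect_matching_def by blast
  then have "{v, mate M v} = {v,u}" using m vu by auto
  then show ?thesis using uv by (auto simp: doubleton_eq_iff)
qed

lemma pm_sub: "perfect_matching V E M \<Longrightarrow> M \<subseteq> E"
  by (simp add: perfect_matching_def)

lemma mate_props:
  assumes pm: "perfect_matching V E M" and v: "v \<in> V"
  shows "mate M v \<in> V" "mate M v \<noteq> v" "mate M (mate M v) = v"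
    "v \<in> A \<Longrightarrow> mate M v \<in> B" "v \<in> B \<Longrightarrow> mate M v \<in> A"
    "{v, mate M v} \<in> E"
proof -
  have m: "{v, mate M v} \<in> M" using pm_mate[OF pm v] .
  then have e: "{v, mate M v} \<in> E" using pm_sub[OF pm] by blast
  then show "{v, mate M v} \<in> E" .
  show "mate M v \<in> V" using edge_sub[OF e] by simp
  show "mate M v \<noteq> v" using edge2[OF e] by (auto simp: doubleton_eq_iff)
  show "mate M (mate M v) = v" using pm_mate_eq[OF pm, of "mate M v" v] m by (simp add: insert_commute)
  obtain a b where ab: "{v, mate M v} = {a,b}" "a \<in> A" "b \<in> B" using edgeAB[OF e] by blast
  show "v \<in> A \<Longrightarrow> mate M v \<in> B" using ab AB_disj by (auto simp: doubleton_eq_iff)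
  show "v \<in> B \<Longrightarrow> mate M v \<in> A" using ab AB_disj by (auto simp: doubleton_eq_iff)
qed

lemma mate_inj: "perfect_matching V E M \<Longrightarrow> inj_on (mate M) V"
  by (metis inj_onI mate_props(3))

lemma count_lemma:
  assumes pm: "perfect_matching V E M" and W: "W \<subseteq> V"
  defines "Q \<equiv> {x\<in>W. mate M x \<notin> W}"
  shows "card (W \<inter> A) + card (Q \<inter> B) = card (W \<inter> B) + card (Q \<inter> A)"
proof -
  have fW: "finite W" using W finV finite_subset by blast
  have bij: "bij_betw (mate M) (W \<inter> A - Q) (W \<inter> B - Q)"
  proof (rule bij_betw_imageI)
    show "inj_on (mate M) (W \<inter> A - Q)" using mate_inj[OF pm] W by (auto intro: inj_on_subset)
    show "mate M ` (W \<inter> A - Q) = W \<inter> B - Q"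
    proof
      show "mate M ` (W \<inter> A - Q) \<subseteq> W \<inter> B - Q"
        using mate_props[OF pm] W by (auto simp: Q_def)
      show "W \<inter> B - Q \<subseteq> mate M ` (W \<inter> A - Q)"
      proof
        fix y assume y: "y \<in> W \<inter> B - Q"
        then have yV: "y \<in> V" using W by auto
        have "mate M y \<in> W \<inter> A - Q" using y mate_props[OF pm yV] by (auto simp: Q_def)
        moreover have "y = mate M (mate M y)" using mate_props[OF pm yV] by simp
        ultimately show "y \<in> mate M ` (W \<inter> A - Q)" by blast
      qed
    qed
  qed
  have c1: "card (W \<inter> A - Q) = card (W \<inter> B - Q)" using bij_betw_same_card[OF bij] .
  have QW: "Q \<subseteq> W" by (auto simp: Q_def)
  have "card (W \<inter> A) = card (W \<inter> A - Q) + card (Q \<inter> A)"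
  proof -
    have "W \<inter> A = (W \<inter> A - Q) \<union> (Q \<inter> A)" using QW by auto
    moreover have "finite (W \<inter> A - Q)" "finite (Q \<inter> A)" using fW QW finite_subset by auto
    moreover have "(W \<inter> A - Q) \<inter> (Q \<inter> A) = {}" by auto
    ultimately show ?thesis by (metis card_Un_disjoint)
  qed
  moreover have "card (W \<inter> B) = card (W \<inter> B - Q) + card (Q \<inter> B)"
  proof -
    have "W \<inter> B = (W \<inter> B - Q) \<union> (Q \<inter> B)" using QW by auto
    moreover have "finite (W \<inter> B - Q)" "finite (Q \<inter> B)" using fW QW finite_subset by auto
    moreover have "(W \<inter> B - Q) \<inter> (Q \<inter> B) = {}" by auto
    ultimately show ?thesis by (metis card_Un_disjoint)
  qed
  ultimately show ?thesis using c1 by simp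
qed

lemma Q_crossing:
  assumes pm: "perfect_matching V E M" and W: "W \<subseteq> V" and x: "x \<in> W" "mate M x \<notin> W"
  shows "{x, mate M x} \<in> crossing E W" "{x, mate M x} \<in> M"
  using mate_props[OF pm] pm_mate[OF pm] W x by (auto simp: crossing_def)

lemma single_crossing:
  assumes W: "W \<subseteq> V" and cr: "crossing E W = {g}"
  shows "V = g"
proof -
  have gE: "g \<in> E" using cr by (auto simp: crossing_def)
  obtain a b where ab: "g = {a,b}" "a \<in> A" "b \<in> B" using edgeAB[OF gE] by blast
  have gc: "g \<inter> W \<noteq> {}" "g - W \<noteq> {}" using cr by (auto simp: crossing_def)
  have ab_ne: "a \<noteq> b" using ab AB_disj by auto
  have side: "(a \<in> W \<and> b \<notin> W) \<or> (b \<in> W \<and> a \<notin> W)" using gc ab by auto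
  define Qf where "Qf M = {x\<in>W. mate M x \<notin> W}" for M
  have Qsub: "Qf M \<subseteq> W \<inter> g" if pm: "perfect_matching V E M" for M
  proof
    fix x assume "x \<in> Qf M"
    then have "x \<in> W" "mate M x \<notin> W" by (auto simp: Qf_def)
    then have "{x, mate M x} \<in> crossing E W" using Q_crossing[OF pm W] by blast
    then show "x \<in> W \<inter> g" using cr \<open>x \<in> W\<close> by auto
  qed
  have Qin: "g \<in> M" if pm: "perfect_matching V E M" and "x \<in> Qf M" for M x
  proof -
    have "x \<in> W" "mate M x \<notin> W" using that by (auto simp: Qf_def)
    then have "{x, mate M x} \<in> crossing E W" "{x, mate M x} \<in> M" using Q_crossing[OF pm W] by blast+
    then show ?thesis using cr by auto
  qed
  have Qg: "Qf M = W \<inter> g" if pm: "perfect_matching V E M" and gM: "g \<in> M" for M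
  proof
    show "Qf M \<subseteq> W \<inter> g" using Qsub[OF pm] .
    show "W \<inter> g \<subseteq> Qf M"
    proof
      fix x assume x: "x \<in> W \<inter> g"
      have "mate M a = b" "mate M b = a" using pm_mate_eq[OF pm] gM ab by (auto simp: insert_commute)
      then show "x \<in> Qf M" using x side ab by (auto simp: Qf_def)
    qed
  qed
  have unb: "card (W \<inter> A) \<noteq> card (W \<inter> B)" if pm: "perfect_matching V E M" and gM: "g \<in> M" for M
  proof -
    have "card (W \<inter> A) + card (Qf M \<inter> B) = card (W \<inter> B) + card (Qf M \<inter> A)"
      using count_lemma[OF pm W] by (simp add: Qf_def)
    moreover have "Qf M = W \<inter> g" using Qg[OF pm gM] .
    ultimately have eq: "card (W \<inter> A) + card (W \<inter> g \<inter> B) = card (W \<inter> B) + card (W \<inter> g \<inter> A)" by simp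
    have aB: "a \<notin> B" and bA: "b \<notin> A" using ab AB_disj by auto
    from side show ?thesis
    proof
      assume s: "a \<in> W \<and> b \<notin> W"
      then have "W \<inter> g \<inter> B = {}" "W \<inter> g \<inter> A = {a}" using ab aB by auto
      then show ?thesis using eq by simp
    next
      assume s: "b \<in> W \<and> a \<notin> W"
      then have "W \<inter> g \<inter> B = {b}" "W \<inter> g \<inter> A = {}" using ab bA by auto
      then show ?thesis using eq by simp
    qed
  qed
  obtain M0 where M0: "perfect_matching V E M0" "g \<in> M0" using mc gE by (auto simp: matching_covered_def)
  have allg: "g \<in> M" if pm: "perfect_matching V E M" for M
  proof (rule ccontr)
    assume "g \<notin> M"
    then have "Qf M = {}" using Qin[OF pm] by blast
    moreover have "card (W \<inter> A) + card (Qf M \<inter> B) = card (W \<inter> B) + card (Qf M \<inter> A)"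
      using count_lemma[OF pm W] by (simp add: Qf_def)
    ultimately have "card (W \<inter> A) = card (W \<inter> B)" by simp
    then show False using unb[OF M0] by simp
  qed
  have only: "h = g" if h: "h \<in> E" "h \<inter> g \<noteq> {}" for h
  proof -
    obtain M where M: "perfect_matching V E M" "h \<in> M" using mc h by (auto simp: matching_covered_def)
    obtain v where v: "v \<in> h" "v \<in> g" using h by blast
    have "v \<in> V" using v gE edge_sub by blast
    then obtain g' where "g' \<in> M" "v \<in> g'" "\<And>g''. g'' \<in> M \<Longrightarrow> v \<in> g'' \<Longrightarrow> g'' = g'"
      using M(1) unfolding perfect_matching_def by blast
    then have "h = g'" "g = g'" using M allg[OF M(1)] v by blast+
    then show ?thesis by simp
  qed
  have "crossing E g = {}"
  proof (rule ccontr)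
    assume "crossing E g \<noteq> {}"
    then obtain h where "h \<in> E" "h \<inter> g \<noteq> {}" "h - g \<noteq> {}" unfolding crossing_def by blast
    then show False using only by blast
  qed
  moreover have "g \<noteq> {}" using ab by simp
  ultimately have "g = V" using closed_conn[of g] edge_sub[OF gE] by blast
  then show ?thesis by simp
qed

lemma cut_one_in:
  assumes cut: "two_edge_cut_sep V E S X Y" and bal: "balanced A B X"
    and g: "S = {g1, g2}" and pm: "perfect_matching V E M" and in1: "g1 \<in> M" and out2: "g2 \<notin> M"
  shows False
proof -
  have cutu: "S \<subseteq> E \<and> card S = 2 \<and> X \<noteq> Y \<and> {Z. is_component V (E - S) Z} = {X, Y} \<and>
     S = {e\<in>E. e \<inter> X \<noteq> {} \<and> e \<inter> Y \<noteq> {}}" using cut unfolding two_edge_cut_sep_def .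
  have SE: "S \<subseteq> E" using cutu by (elim conjE)
  have XY: "X \<noteq> Y" using cutu by (elim conjE)
  have comps: "{Z. is_component V (E - S) Z} = {X, Y}" using cutu by (elim conjE)
  have Sdef: "S = {e\<in>E. e \<inter> X \<noteq> {} \<and> e \<inter> Y \<noteq> {}}" using cutu by (elim conjE)
  have cX: "is_component V (E - S) X" and cY: "is_component V (E - S) Y"
  proof -
    have "X \<in> {Z. is_component V (E - S) Z}" "Y \<in> {Z. is_component V (E - S) Z}"
      unfolding comps by simp_all
    then show "is_component V (E - S) X" "is_component V (E - S) Y" by simp_all
  qed
  have disj: "X \<inter> Y = {}" using comp_disj[OF cX cY XY] .
  have XV: "X \<subseteq> V" using cX by (simp add: is_component_def)
  have clo: "\<forall>e\<in>E - S. e \<inter> X \<noteq> {} \<longrightarrow> e \<subseteq> X" using cX unfolding is_component_def by (elim conjE)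
  have g1S: "g1 \<in> S" using g by simp
  then have "g1 \<in> {e\<in>E. e \<inter> X \<noteq> {} \<and> e \<inter> Y \<noteq> {}}" by (simp only: Sdef)
  then have g1E: "g1 \<in> E" and g1X: "g1 \<inter> X \<noteq> {}" and g1Y: "g1 \<inter> Y \<noteq> {}" by simp_all
  obtain x1 where x1: "x1 \<in> g1" "x1 \<in> X" using g1X by blast
  obtain y1 where y1: "y1 \<in> g1" "y1 \<in> Y" using g1Y by blast
  have x1y1: "x1 \<noteq> y1" using x1 y1 disj by blast
  obtain u v where uv: "g1 = {u,v}" "u \<noteq> v" using edge2[OF g1E] by blast
  have g1eq: "g1 = {x1, y1}"
  proof -
    have "x1 = u \<or> x1 = v" "y1 = u \<or> y1 = v" using uv x1 y1 by auto
    then show ?thesis using uv x1y1 by blast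
  qed
  define Q where "Q = {x\<in>X. mate M x \<notin> X}"
  have y1X: "y1 \<notin> X" using y1 disj by blast
  have "Q = {x1}"
  proof
    have "mate M x1 = y1" using pm_mate_eq[OF pm, of x1 y1] in1 g1eq by simp
    then show "{x1} \<subseteq> Q" using x1 y1X by (simp add: Q_def)
    show "Q \<subseteq> {x1}"
    proof
      fix x assume xQ: "x \<in> Q"
      then have xX: "x \<in> X" and mx: "mate M x \<notin> X" by (auto simp: Q_def)
      have xV: "x \<in> V" using xX XV by blast
      have inM: "{x, mate M x} \<in> M" using pm_mate[OF pm xV] .
      have inE: "{x, mate M x} \<in> E" using mate_props(6)[OF pm xV] .
      have "{x, mate M x} \<in> S"
      proof (rule ccontr)
        assume nS: "{x, mate M x} \<notin> S"
        have inD: "{x, mate M x} \<in> E - S" using inE nS by (rule DiffI)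
        have meetX: "{x, mate M x} \<inter> X \<noteq> {}" using xX by auto
        have "{x, mate M x} \<subseteq> X" using clo[rule_format, OF inD meetX] .
        then show False using mx by simp
      qed
      then have "{x, mate M x} = g1 \<or> {x, mate M x} = g2" using g by simp
      then have "{x, mate M x} = g1" using out2 inM by blast
      then have "x \<in> g1" by (metis insertI1)
      then have "x = x1 \<or> x = y1" using g1eq by simp
      then show "x \<in> {x1}" using xX y1X by blast
    qed
  qed
  have "card (X \<inter> A) + card (Q \<inter> B) = card (X \<inter> B) + card (Q \<inter> A)"
    using count_lemma[OF pm XV] by (simp add: Q_def)
  moreover have "card (X \<inter> A) = card (X \<inter> B)" using bal by (simp add: balanced_def)
  ultimately have cnt: "card (Q \<inter> B) = card (Q \<inter> A)" by simp
  have "x1 \<in> A \<or> x1 \<in> B" using x1 XV AB_V by auto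
  then show False
  proof (cases "x1 \<in> A")
    case True
    then have "Q \<inter> A = {x1}" "Q \<inter> B = {}" using \<open>Q = {x1}\<close> AB_disj by auto
    then show False using cnt by simp
  next
    case False
    then have "Q \<inter> A = {}" "Q \<inter> B = {x1}" using \<open>Q = {x1}\<close> AB_disj x1 XV AB_V by auto
    then show False using cnt by simp
  qed
qed

lemma cut_equiv:
  assumes cut: "two_edge_cut_sep V E S X Y" and bal: "balanced A B X"
  shows "\<exists>K. equivalent_class V E K"
proof -
  have SE: "S \<subseteq> E" using cut unfolding two_edge_cut_sep_def by (elim conjE)
  have c2: "card S = 2" using cut unfolding two_edge_cut_sep_def by (elim conjE)
  obtain g1 g2 where g: "S = {g1, g2}" "g1 \<noteq> g2" using c2 by (auto simp: card_Suc_eq numeral_2_eq_2)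
  have eq: "g1 \<in> M \<longleftrightarrow> g2 \<in> M" if pm: "perfect_matching V E M" for M
  proof -
    have g': "S = {g2, g1}" using g(1) by (simp add: insert_commute)
    show ?thesis using cut_one_in[OF cut bal g(1) pm] cut_one_in[OF cut bal g' pm] by blast
  qed
  have "equivalent_edges V E e f" if "e \<in> S" "f \<in> S" for e f
    unfolding equivalent_edges_def
  proof (intro allI impI)
    fix M assume pm: "perfect_matching V E M"
    have "e = g1 \<or> e = g2" "f = g1 \<or> f = g2" using that g(1) by auto
    then show "e \<in> M \<longleftrightarrow> f \<in> M" using eq[OF pm] by blast
  qed
  then have "equivalent_class V E S"
    unfolding equivalent_class_def using SE c2 by simp
  then show ?thesis by blast
qed

lemma crossing_compl: "crossing E (V - Z) = crossing E Z"
proof -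
  have "h \<inter> (V - Z) \<noteq> {} \<longleftrightarrow> h - Z \<noteq> {}" "h - (V - Z) \<noteq> {} \<longleftrightarrow> h \<inter> Z \<noteq> {}" if "h \<in> E" for h
    using edge_sub[OF that] by blast+
  then show ?thesis unfolding crossing_def by blast
qed

lemma crossingD:
  assumes "h \<in> crossing E W"
  obtains u w where "h = {u, w}" "u \<in> W" "w \<notin> W" "h \<in> E"
proof -
  have hE: "h \<in> E" and m: "h \<inter> W \<noteq> {}" and o: "h - W \<noteq> {}" using assms by (auto simp: crossing_def)
  obtain u where u: "u \<in> h" "u \<in> W" using m by blast
  obtain w where w: "w \<in> h" "w \<notin> W" using o by blast
  obtain x y where xy: "h = {x,y}" using edge2[OF hE] by blast
  have "h = {u, w}" using xy u w by auto
  then show ?thesis using that u w hE by blast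
qed

lemma side_conn:
  assumes ZV: "Z \<subseteq> V" and cr: "crossing E Z = {e, f}" and ef: "e \<noteq> f"
    and x: "x \<in> Z" "x \<in> e" and Ve: "V \<noteq> e" and Vf: "V \<noteq> f" and v: "v \<in> Z"
  shows "(adj {h \<in> E - {e,f}. h \<subseteq> Z})\<^sup>*\<^sup>* x v"
proof -
  define F where "F = E - {e,f}"
  define C where "C = {v. (adj F)\<^sup>*\<^sup>* x v}"
  have Fcl: "h \<subseteq> Z" if "h \<in> F" "h \<inter> Z \<noteq> {}" for h
  proof (rule ccontr)
    assume "\<not> h \<subseteq> Z"
    then have "h \<in> crossing E Z" using that unfolding crossing_def F_def by blast
    then show False using that(1) cr unfolding F_def by blast
  qed
  have CZ: "C \<subseteq> Z"
  proof
    fix v assume "v \<in> C"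
    then have "(adj F)\<^sup>*\<^sup>* x v" by (simp add: C_def)
    then show "v \<in> Z"
    proof (induction rule: rtranclp_induct)
      case base then show ?case using x by simp
    next
      case (step y z)
      then have "{y,z} \<in> F" by (simp add: adj_def)
      moreover have "{y,z} \<inter> Z \<noteq> {}" using step by blast
      ultimately have "{y,z} \<subseteq> Z" by (rule Fcl)
      then show ?case by simp
    qed
  qed
  have xC: "x \<in> C" by (simp add: C_def)
  have Cstep: "w \<in> C" if "u \<in> C" "{u,w} \<in> F" for u w
  proof -
    have "adj F u w" using that by (simp add: adj_def)
    then show ?thesis using that(1) unfolding C_def by (simp add: rtranclp.rtrancl_into_rtrancl)
  qed
  have crC: "crossing E C \<subseteq> {e,f}"
  proof
    fix h assume h: "h \<in> crossing E C"
    then obtain u w where uw: "h = {u,w}" "u \<in> C" "w \<notin> C" "h \<in> E" by (rule crossingD)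
    show "h \<in> {e,f}"
    proof (rule ccontr)
      assume "h \<notin> {e,f}"
      then have "{u,w} \<in> F" using uw by (simp add: F_def)
      then have "w \<in> C" using Cstep uw(2) by blast
      then show False using uw by simp
    qed
  qed
  have eE: "e \<in> E" using cr by (auto simp: crossing_def)
  have "e \<in> crossing E Z" using cr by simp
  then have "e - Z \<noteq> {}" by (simp add: crossing_def)
  then have "e - C \<noteq> {}" using CZ by blast
  moreover have "e \<inter> C \<noteq> {}" using x xC by blast
  ultimately have eC: "e \<in> crossing E C" using eE by (simp add: crossing_def)
  have fC: "f \<in> crossing E C"
  proof (rule ccontr)
    assume "f \<notin> crossing E C"
    then have "crossing E C = {e}" using crC eC by blast
    moreover have "C \<subseteq> V" using CZ ZV by (rule subset_trans)
    ultimately have "V = e" using single_crossing by blast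
    then show False using Ve by simp
  qed
  define D where "D = Z - C"
  have crD: "crossing E D = {}"
  proof (rule ccontr)
    assume "crossing E D \<noteq> {}"
    then obtain h where "h \<in> crossing E D" by blast
    then obtain u w where uw: "h = {u,w}" "u \<in> D" "w \<notin> D" "h \<in> E" by (rule crossingD)
    show False
    proof (cases "h \<in> {e,f}")
      case True
      then have hC: "h \<in> crossing E C" using eC fC by blast
      have hZ: "h \<in> crossing E Z" using True cr by simp
      obtain p q where pq: "h = {p,q}" "p \<in> C" "q \<notin> C" using hC by (rule crossingD)
      have "h - Z \<noteq> {}" using hZ by (simp add: crossing_def)
      then have "q \<notin> Z" using pq CZ by blast
      have "u \<in> {p,q}" using pq uw by blast
      then have "u = p \<or> u = q" by simp
      then have "u \<in> C \<or> u \<notin> Z" using pq \<open>q \<notin> Z\<close> by blast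
      then show False using uw(2) unfolding D_def by blast
    next
      case False
      then have hF: "h \<in> F" using uw by (simp add: F_def)
      have "u \<in> Z" using uw(2) unfolding D_def by blast
      then have "h \<inter> Z \<noteq> {}" using uw(1) by blast
      then have "h \<subseteq> Z" using Fcl hF by blast
      then have "w \<in> Z" using uw(1) by blast
      then have "w \<in> C" using uw(3) unfolding D_def by blast
      moreover have "{w,u} \<in> F" using hF uw by (simp add: insert_commute)
      ultimately have "u \<in> C" using Cstep by blast
      then show False using uw(2) unfolding D_def by blast
    qed
  qed
  have "D = {}"
  proof (rule ccontr)
    assume "D \<noteq> {}"
    moreover have "D \<subseteq> V" unfolding D_def using ZV by blast
    ultimately have "D = V" using closed_conn[of D] crD by blast
    then have "x \<in> D" using x ZV by blast
    then show False using xC unfolding D_def by blast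
  qed
  then have "v \<in> C" using v unfolding D_def by blast
  then have "(adj F)\<^sup>*\<^sup>* x v" by (simp add: C_def)
  then show ?thesis
  proof (induction rule: rtranclp_induct)
    case base then show ?case by simp
  next
    case (step y z)
    have yC: "y \<in> C" using step(1) by (simp add: C_def)
    have "{y,z} \<in> F" using step(2) by (simp add: adj_def)
    then have zC: "z \<in> C" using Cstep yC by blast
    have "{y,z} \<in> {h \<in> E - {e,f}. h \<subseteq> Z}" using \<open>{y,z} \<in> F\<close> yC zC CZ F_def by auto
    then have "adj {h \<in> E - {e,f}. h \<subseteq> Z} y z" by (simp add: adj_def)
    then show ?case using step(3) by (simp add: rtranclp.rtrancl_into_rtrancl)
  qed
qed

lemma comp_of:
  assumes ZV: "Z \<subseteq> V" and cr: "crossing E Z = {e, f}" and ef: "e \<noteq> f"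
    and x: "x \<in> Z" "x \<in> e" and Ve: "V \<noteq> e" and Vf: "V \<noteq> f"
  shows "is_component V (E - {e,f}) Z"
proof -
  have r: "(adj {h \<in> E - {e,f}. h \<subseteq> Z})\<^sup>*\<^sup>* x v" if "v \<in> Z" for v
    using side_conn[OF ZV cr ef x Ve Vf that] .
  have conn: "connected_graph Z {h \<in> E - {e,f}. h \<subseteq> Z}"
    unfolding connected_graph_def
  proof (intro conjI ballI)
    show "Z \<noteq> {}" using x by blast
    fix u v assume "u \<in> Z" "v \<in> Z"
    show "(adj {h \<in> E - {e,f}. h \<subseteq> Z})\<^sup>*\<^sup>* u v"
      using rtranclp_trans[OF rtranclp_adj_sym[OF r[OF \<open>u \<in> Z\<close>]] r[OF \<open>v \<in> Z\<close>]] .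
  qed
  have clo: "h \<subseteq> Z" if "h \<in> E - {e,f}" "h \<inter> Z \<noteq> {}" for h
  proof (rule ccontr)
    assume "\<not> h \<subseteq> Z"
    then have "h \<in> crossing E Z" using that unfolding crossing_def by blast
    then show False using that(1) cr by blast
  qed
  show ?thesis unfolding is_component_def using ZV conn clo by blast
qed

lemma cut_from_Z:
  assumes ZV: "Z \<subseteq> V" and cr: "crossing E Z = {e, f}" and ef: "e \<noteq> f"
    and x: "x \<in> Z" "x \<in> e" and y: "y \<in> V" "y \<notin> Z" "y \<in> e" and Ve: "V \<noteq> e" and Vf: "V \<noteq> f"
  shows "two_edge_cut_sep V E {e,f} Z (V - Z)"
proof -
  have cZ: "is_component V (E - {e,f}) Z" using comp_of[OF ZV cr ef x Ve Vf] .
  have cr': "crossing E (V - Z) = {e, f}" using crossing_compl cr by simp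
  have cY: "is_component V (E - {e,f}) (V - Z)"
    using comp_of[OF _ cr' ef _ y(3) Ve Vf] y by blast
  have eE: "e \<in> E" "f \<in> E" using cr by (auto simp: crossing_def)
  have neq: "Z \<noteq> V - Z" using x by blast
  have comps: "{W. is_component V (E - {e,f}) W} = {Z, V - Z}"
  proof
    show "{Z, V - Z} \<subseteq> {W. is_component V (E - {e,f}) W}" using cZ cY by simp
    show "{W. is_component V (E - {e,f}) W} \<subseteq> {Z, V - Z}"
    proof
      fix W assume "W \<in> {W. is_component V (E - {e,f}) W}"
      then have cW: "is_component V (E - {e,f}) W" by simp
      then have "W \<noteq> {}" "W \<subseteq> V" unfolding is_component_def connected_graph_def by blast+
      then obtain w where w: "w \<in> W" "w \<in> V" by blast
      show "W \<in> {Z, V - Z}"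
      proof (cases "w \<in> Z")
        case True
        then have "W = Z" using comp_eq[OF cW cZ w(1)] by blast
        then show ?thesis by simp
      next
        case False
        then have "w \<in> V - Z" using w by blast
        then have "W = V - Z" using comp_eq[OF cW cY w(1)] by blast
        then show ?thesis by simp
      qed
    qed
  qed
  have Seq: "{e,f} = {h\<in>E. h \<inter> Z \<noteq> {} \<and> h \<inter> (V - Z) \<noteq> {}}"
  proof -
    have "h \<inter> (V - Z) \<noteq> {} \<longleftrightarrow> h - Z \<noteq> {}" if "h \<in> E" for h
      using edge_sub[OF that] by blast
    then have "{h\<in>E. h \<inter> Z \<noteq> {} \<and> h \<inter> (V - Z) \<noteq> {}} = crossing E Z"
      unfolding crossing_def by blast
    then show ?thesis using cr by simp
  qed
  show ?thesis unfolding two_edge_cut_sep_def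
  proof (intro conjI)
    show "{e,f} \<subseteq> E" using eE by simp
    show "card {e,f} = 2" using ef by simp
    show "Z \<noteq> V - Z" using neq .
    show "{W. is_component V (E - {e,f}) W} = {Z, V - Z}" using comps .
    show "{e,f} = {h\<in>E. h \<inter> Z \<noteq> {} \<and> h \<inter> (V - Z) \<noteq> {}}" using Seq .
  qed
qed

lemma A_V: "A \<subseteq> V" and B_V: "B \<subseteq> V" using AB_V by auto

lemma nbrA: assumes "{b,a} \<in> E" "b \<in> B" shows "a \<in> A"
proof -
  obtain x y where xy: "{b,a} = {x,y}" "x \<in> A" "y \<in> B" using edgeAB[OF assms(1)] by blast
  have "(b = x \<and> a = y) \<or> (b = y \<and> a = x)" using xy(1) by (simp add: doubleton_eq_iff)
  then show ?thesis using xy assms(2) AB_disj by blast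
qed

lemma nbrB: assumes "{a,b} \<in> E" "a \<in> A" shows "b \<in> B"
proof -
  obtain x y where xy: "{a,b} = {x,y}" "x \<in> A" "y \<in> B" using edgeAB[OF assms(1)] by blast
  have "(a = x \<and> b = y) \<or> (a = y \<and> b = x)" using xy(1) by (simp add: doubleton_eq_iff)
  then show ?thesis using xy assms(2) AB_disj by blast
qed

lemma pm_unique:
  assumes "perfect_matching V E M" "v \<in> V" "g \<in> M" "v \<in> g" "g' \<in> M" "v \<in> g'"
  shows "g = g'"
proof -
  have "\<exists>!e. e \<in> M \<and> v \<in> e" using assms(1,2) by (simp add: perfect_matching_def)
  then show ?thesis using assms(3-6) by blast
qed

lemma tight:
  assumes pm: "perfect_matching V E M" and X: "X \<subseteq> V" and im: "mate M ` X \<subseteq> Y"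
    and fY: "finite Y" and c: "card Y \<le> card X"
  shows "mate M ` X = Y"
proof -
  have "inj_on (mate M) X" using mate_inj[OF pm] X by (rule inj_on_subset)
  then have "card (mate M ` X) = card X" by (rule card_image)
  then have "card (mate M ` X) = card Y" using card_mono[OF fY im] c by simp
  then show ?thesis using card_subset_eq[OF fY im] by simp
qed

lemma cardAB: "card A = card B"
proof -
  obtain M where pm: "perfect_matching V E M" using mc by (auto simp: matching_covered_def)
  have i: "inj_on (mate M) A" "inj_on (mate M) B" using mate_inj[OF pm] A_V B_V by (auto intro: inj_on_subset)
  have "mate M ` A \<subseteq> B" "mate M ` B \<subseteq> A" using mate_props(4,5)[OF pm] A_V B_V by auto
  then show ?thesis using card_inj_on_le[OF i(1) _ finB] card_inj_on_le[OF i(2) _ finA] by simp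
qed

end

locale fwd = mcb +
  fixes M :: "'a set set" and a1 b1 a2 b2 :: 'a
  assumes pm: "perfect_matching V E M"
    and eM: "{a1,b1} \<in> M" and fM: "{a2,b2} \<in> M"
    and a1A: "a1 \<in> A" and b1B: "b1 \<in> B" and a2A: "a2 \<in> A" and b2B: "b2 \<in> B"
    and a12: "a1 \<noteq> a2"
    and equiv: "\<And>M'. perfect_matching V E M' \<Longrightarrow> {a1,b1} \<in> M' \<longleftrightarrow> {a2,b2} \<in> M'"
begin

abbreviation "L k \<equiv> layer E (mate M) a1 a2 b1 k"
definition "SS = (\<Union>k. L k)"
definition "NS = {a. \<exists>b\<in>SS. {b,a} \<in> E}"
definition "near N b \<longleftrightarrow> N \<subseteq> E \<and> {a2,b2} \<in> N \<and>
   (\<forall>v\<in>V. v \<noteq> a1 \<and> v \<noteq> b \<longrightarrow> (\<exists>!g. g \<in> N \<and> v \<in> g)) \<and> (\<forall>g\<in>N. a1 \<notin> g \<and> b \<notin> g)"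

lemma V4: "a1 \<in> V" "b1 \<in> V" "a2 \<in> V" "b2 \<in> V" using a1A b1B a2A b2B A_V B_V by auto

lemma m4: "mate M a1 = b1" "mate M b1 = a1" "mate M a2 = b2" "mate M b2 = a2"
  using pm_mate_eq[OF pm] eM fM by (auto simp: insert_commute)

lemma b12: "b1 \<noteq> b2" using m4 a12 by metis

lemma ef: "{a1,b1} \<noteq> {a2,b2}" using a12 b12 a1A b2B AB_disj by (auto simp: doubleton_eq_iff)

lemma ndAB: "x \<in> A \<Longrightarrow> x \<notin> B" using AB_disj by blast

lemma L_B: "L k \<subseteq> B"
proof (induction k)
  case 0 then show ?case using b1B by simp
next
  case (Suc k)
  show ?case
  proof
    fix x assume "x \<in> L (Suc k)"
    then consider "x \<in> L k" | a b where "x = mate M a" "b \<in> L k" "{b,a} \<in> E" by auto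
    then show "x \<in> B"
    proof cases
      case 1 then show ?thesis using Suc by blast
    next
      case (2 a b)
      then have "a \<in> A" using nbrA Suc by blast
      then show ?thesis using 2 mate_props(4)[OF pm] A_V by blast
    qed
  qed
qed

lemma b2_notin: "b2 \<notin> L k"
proof (induction k)
  case 0 then show ?case using b12 by simp
next
  case (Suc k)
  show ?case
  proof
    assume "b2 \<in> L (Suc k)"
    then consider "b2 \<in> L k" | a b where "b2 = mate M a" "b \<in> L k" "{b,a} \<in> E" "a \<noteq> a2" by auto
    then show False
    proof cases
      case 1 then show ?thesis using Suc by blast
    next
      case (2 a b)
      have "a \<in> V" using 2 edge_sub by blast
      then have "a = mate M b2" using 2 mate_props(3)[OF pm] by metis
      then show ?thesis using 2 m4 by simp
    qed
  qed
qed

lemma inv: "\<forall>b\<in>L k. \<exists>N. near N b \<and> (\<forall>a\<in>A. mate M a \<notin> L k \<longrightarrow> {a, mate M a} \<in> N)"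
proof (induction k)
  case 0
  show ?case
  proof
    fix b assume "b \<in> L 0"
    then have b: "b = b1" by simp
    define N where "N = M - {{a1,b1}}"
    have "near N b1" unfolding near_def
    proof (intro conjI ballI impI)
      show "N \<subseteq> E" using pm_sub[OF pm] unfolding N_def by blast
      show "{a2,b2} \<in> N" using fM ef unfolding N_def by simp
      fix v assume v: "v \<in> V" "v \<noteq> a1 \<and> v \<noteq> b1"
      obtain g where g: "g \<in> M" "v \<in> g" using pm v(1) unfolding perfect_matching_def by blast
      have gN: "g \<in> N" using g v(2) unfolding N_def by auto
      show "\<exists>!g. g \<in> N \<and> v \<in> g"
      proof (rule ex1I[of _ g])
        show "g \<in> N \<and> v \<in> g" using gN g by simp
        fix g' assume "g' \<in> N \<and> v \<in> g'"
        then show "g' = g" using pm_unique[OF pm v(1)] g unfolding N_def by blast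
      qed
    next
      fix g assume gN: "g \<in> N"
      then have gM: "g \<in> M" and ge: "g \<noteq> {a1,b1}" unfolding N_def by auto
      show "a1 \<notin> g"
      proof
        assume "a1 \<in> g"
        then have "g = {a1,b1}" using pm_unique[OF pm V4(1) gM _ eM] by simp
        then show False using ge by simp
      qed
      show "b1 \<notin> g"
      proof
        assume "b1 \<in> g"
        then have "g = {a1,b1}" using pm_unique[OF pm V4(2) gM _ eM] by simp
        then show False using ge by simp
      qed
    qed
    moreover have "{a, mate M a} \<in> N" if a: "a \<in> A" "mate M a \<notin> L 0" for a
    proof -
      have aV: "a \<in> V" using a A_V by blast
      have in1: "{a, mate M a} \<in> M" using pm_mate[OF pm aV] .
      have "{a, mate M a} \<noteq> {a1,b1}"
      proof
        assume "{a, mate M a} = {a1,b1}"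
        then have "a = a1 \<or> a = b1" by (auto simp: doubleton_eq_iff)
        then have "a = a1" using a(1) b1B AB_disj by blast
        then show False using a(2) m4 by simp
      qed
      then show ?thesis using in1 unfolding N_def by simp
    qed
    ultimately show "\<exists>N. near N b \<and> (\<forall>a\<in>A. mate M a \<notin> L 0 \<longrightarrow> {a, mate M a} \<in> N)"
      using b by blast
  qed
next
  case (Suc k)
  show ?case
  proof
    fix b' assume b': "b' \<in> L (Suc k)"
    have old: "\<exists>N. near N b' \<and> (\<forall>a\<in>A. mate M a \<notin> L (Suc k) \<longrightarrow> {a, mate M a} \<in> N)"
      if "b' \<in> L k"
    proof -
      have "\<exists>N. near N b' \<and> (\<forall>a\<in>A. mate M a \<notin> L k \<longrightarrow> {a, mate M a} \<in> N)"
        using Suc that by (rule bspec)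
      then obtain N where N: "near N b'" "\<forall>a\<in>A. mate M a \<notin> L k \<longrightarrow> {a, mate M a} \<in> N"
        by (elim exE conjE)
      have "\<forall>a\<in>A. mate M a \<notin> L (Suc k) \<longrightarrow> {a, mate M a} \<in> N" using N(2) by auto
      then show ?thesis using N(1) by blast
    qed
    show "\<exists>N. near N b' \<and> (\<forall>a\<in>A. mate M a \<notin> L (Suc k) \<longrightarrow> {a, mate M a} \<in> N)"
    proof (cases "b' \<in> L k")
      case True then show ?thesis using old by blast
    next
      case False
      then obtain a b where ab: "b' = mate M a" "b \<in> L k" "{b,a} \<in> E" "a \<noteq> a1" "a \<noteq> a2"
        using b' by auto
      have "\<exists>N. near N b \<and> (\<forall>a\<in>A. mate M a \<notin> L k \<longrightarrow> {a, mate M a} \<in> N)"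
        using Suc ab(2) by (rule bspec)
      then obtain N where N: "near N b" and Nk: "\<forall>a\<in>A. mate M a \<notin> L k \<longrightarrow> {a, mate M a} \<in> N"
        by (elim exE conjE)
      have bB: "b \<in> B" using L_B ab(2) by blast
      have aA: "a \<in> A" using nbrA[OF ab(3) bB] .
      have aV: "a \<in> V" and bV: "b \<in> V" using aA bB A_V B_V by auto
      have maB: "mate M a \<in> B" using mate_props(4)[OF pm aV aA] .
      have maV: "mate M a \<in> V" using maB B_V by blast
      have mak: "mate M a \<notin> L k" using False ab(1) by simp
      have mab: "mate M a \<noteq> b" using mak ab(2) by blast
      have maa: "mate M a \<noteq> a" using mate_props(2)[OF pm aV] .
      have ba: "b \<noteq> a" using aA bB AB_disj by blast
      have a1b: "a1 \<noteq> b" using a1A bB AB_disj by blast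
      have a1ma: "a1 \<noteq> mate M a" using a1A maB AB_disj by blast
      have gaN: "{a, mate M a} \<in> N" using Nk aA mak by blast
      have Nd: "N \<subseteq> E \<and> {a2,b2} \<in> N \<and>
          (\<forall>v\<in>V. v \<noteq> a1 \<and> v \<noteq> b \<longrightarrow> (\<exists>!g. g \<in> N \<and> v \<in> g)) \<and> (\<forall>g\<in>N. a1 \<notin> g \<and> b \<notin> g)"
        using N unfolding near_def .
      have NE: "N \<subseteq> E" using Nd by (elim conjE)
      have fN: "{a2,b2} \<in> N" using Nd by (elim conjE)
      have Nu0: "\<forall>v\<in>V. v \<noteq> a1 \<and> v \<noteq> b \<longrightarrow> (\<exists>!g. g \<in> N \<and> v \<in> g)" using Nd by (elim conjE)
      have Nf0: "\<forall>g\<in>N. a1 \<notin> g \<and> b \<notin> g" using Nd by (elim conjE)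
      have Nu: "\<exists>!g. g \<in> N \<and> v \<in> g" if "v \<in> V" "v \<noteq> a1" "v \<noteq> b" for v
        using Nu0 that by blast
      have Nf: "a1 \<notin> g \<and> b \<notin> g" if "g \<in> N" for g
        using Nf0 that by blast
      have Nuq: "g = g'" if "v \<in> V" "v \<noteq> a1" "v \<noteq> b" "g \<in> N" "v \<in> g" "g' \<in> N" "v \<in> g'" for v g g'
        using Nu[OF that(1-3)] that(4-7) by blast
      define N' where "N' = insert {b,a} (N - {{a, mate M a}})"
      have "near N' (mate M a)" unfolding near_def
      proof (intro conjI ballI impI)
        show "N' \<subseteq> E" using NE ab(3) unfolding N'_def by blast
        have "{a2,b2} \<noteq> {a, mate M a}"
        proof
          assume "{a2,b2} = {a, mate M a}"
          then have "a = a2 \<or> a = b2" by (auto simp: doubleton_eq_iff)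
          then show False using ab(5) aA b2B AB_disj by blast
        qed
        then show "{a2,b2} \<in> N'" using fN unfolding N'_def by blast
      next
        fix v assume v: "v \<in> V" "v \<noteq> a1 \<and> v \<noteq> mate M a"
        show "\<exists>!g. g \<in> N' \<and> v \<in> g"
        proof (cases "v = b \<or> v = a")
          case True
          show ?thesis
          proof (rule ex1I[of _ "{b,a}"])
            show "{b,a} \<in> N' \<and> v \<in> {b,a}" using True unfolding N'_def by blast
            fix g' assume g': "g' \<in> N' \<and> v \<in> g'"
            show "g' = {b,a}"
            proof (rule ccontr)
              assume ne: "g' \<noteq> {b,a}"
              then have g'N: "g' \<in> N" "g' \<noteq> {a, mate M a}" using g' unfolding N'_def by auto
              show False
              proof (cases "v = b")
                case True then show False using Nf[OF g'N(1)] g' by blast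
              next
                case False
                then have "v = a" using \<open>v = b \<or> v = a\<close> by blast
                then have "g' = {a, mate M a}" using Nuq[OF aV ab(4) ba[symmetric] g'N(1) _ gaN] g' by blast
                then show False using g'N(2) by blast
              qed
            qed
          qed
        next
          case False
          then have vb: "v \<noteq> b" "v \<noteq> a" by auto
          obtain g where g: "g \<in> N" "v \<in> g" using Nu[OF v(1) _ vb(1)] v(2) by blast
          have gne: "g \<noteq> {a, mate M a}" using g(2) vb(2) v(2) by blast
          show ?thesis
          proof (rule ex1I[of _ g])
            show "g \<in> N' \<and> v \<in> g" using g gne unfolding N'_def by blast
            fix g' assume g': "g' \<in> N' \<and> v \<in> g'"
            then have "g' \<noteq> {b,a}" using vb by blast
            then have "g' \<in> N" using g' unfolding N'_def by blast
            then show "g' = g" using Nuq[OF v(1) _ vb(1) _ _ g(1) g(2)] v(2) g' by blast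
          qed
        qed
      next
        fix g assume gN': "g \<in> N'"
        have both: "a1 \<notin> g \<and> mate M a \<notin> g"
        proof (cases "g = {b,a}")
          case True then show ?thesis using a1b ab(4) mab maa by auto
        next
          case False
          then have gN: "g \<in> N" "g \<noteq> {a, mate M a}" using gN' unfolding N'_def by auto
          have "mate M a \<notin> g"
          proof
            assume "mate M a \<in> g"
            then have "g = {a, mate M a}" using Nuq[OF maV a1ma[symmetric] mab gN(1) _ gaN] by blast
            then show False using gN(2) by blast
          qed
          then show ?thesis using Nf[OF gN(1)] by blast
        qed
        then show "a1 \<notin> g" by simp
        show "mate M a \<notin> g" using both by simp
      qed
      moreover have "{a', mate M a'} \<in> N'" if a': "a' \<in> A" "mate M a' \<notin> L (Suc k)" for a'
      proof -
        have "mate M a' \<notin> L k" using a' by simp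
        then have inN: "{a', mate M a'} \<in> N" using Nk a'(1) by blast
        have "{a', mate M a'} \<noteq> {a, mate M a}"
        proof
          assume eq: "{a', mate M a'} = {a, mate M a}"
          have "a' \<noteq> mate M a" using a'(1) maB AB_disj by blast
          then have "a' = a" using eq by (auto simp: doubleton_eq_iff)
          moreover have "mate M a \<in> L (Suc k)" using ab(2-5) by auto
          ultimately show False using a'(2) by simp
        qed
        then show ?thesis using inN unfolding N'_def by blast
      qed
      ultimately show ?thesis using ab(1) by blast
    qed
  qed
qed

lemma SS_B: "SS \<subseteq> B" using L_B unfolding SS_def by blast
lemma b2_SS: "b2 \<notin> SS" using b2_notin unfolding SS_def by blast
lemma b1_SS: "b1 \<in> SS" unfolding SS_def by (rule UN_I[of 0]) simp_all
lemma SS_clo: assumes "b \<in> SS" "{b,a} \<in> E" "a \<noteq> a1" "a \<noteq> a2" shows "mate M a \<in> SS"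
proof -
  obtain k where k: "b \<in> L k" using assms(1) unfolding SS_def by blast
  have "mate M a \<in> L (Suc k)" using k assms(2-4) by auto
  then show ?thesis unfolding SS_def by blast
qed
lemma finSS: "finite SS" using SS_B finB finite_subset by blast
lemma NS_A: "NS \<subseteq> A"
proof
  fix a assume "a \<in> NS"
  then obtain b where "b \<in> SS" "{b,a} \<in> E" unfolding NS_def by blast
  then show "a \<in> A" using nbrA SS_B by blast
qed
lemma finNS: "finite NS" using NS_A finA finite_subset by blast
lemma eE: "{a1,b1} \<in> E" and fE: "{a2,b2} \<in> E" using eM fM pm_sub[OF pm] by blast+
lemma a1_NS: "a1 \<in> NS" unfolding NS_def using b1_SS eE by (auto simp: insert_commute)

lemma F3: assumes bS: "b \<in> SS" and ba: "{b,a1} \<in> E" shows "b = b1"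
proof (rule ccontr)
  assume bb1: "b \<noteq> b1"
  obtain k where k: "b \<in> L k" using bS unfolding SS_def by blast
  have "\<exists>N. near N b \<and> (\<forall>a\<in>A. mate M a \<notin> L k \<longrightarrow> {a, mate M a} \<in> N)"
    using inv k by (rule bspec)
  then obtain N where N: "near N b" by blast
  have Nd: "N \<subseteq> E \<and> {a2,b2} \<in> N \<and>
      (\<forall>v\<in>V. v \<noteq> a1 \<and> v \<noteq> b \<longrightarrow> (\<exists>!g. g \<in> N \<and> v \<in> g)) \<and> (\<forall>g\<in>N. a1 \<notin> g \<and> b \<notin> g)"
    using N unfolding near_def .
  have NE: "N \<subseteq> E" using Nd by (elim conjE)
  have fN: "{a2,b2} \<in> N" using Nd by (elim conjE)
  have Nu0: "\<forall>v\<in>V. v \<noteq> a1 \<and> v \<noteq> b \<longrightarrow> (\<exists>!g. g \<in> N \<and> v \<in> g)" using Nd by (elim conjE)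
  have Nf0: "\<forall>g\<in>N. a1 \<notin> g \<and> b \<notin> g" using Nd by (elim conjE)
  define M' where "M' = insert {b,a1} N"
  have pm': "perfect_matching V E M'" unfolding perfect_matching_def
  proof (intro conjI ballI)
    show "M' \<subseteq> E" using NE ba unfolding M'_def by blast
    fix v assume v: "v \<in> V"
    show "\<exists>!g. g \<in> M' \<and> v \<in> g"
    proof (cases "v = a1 \<or> v = b")
      case True
      show ?thesis
      proof (rule ex1I[of _ "{b,a1}"])
        show "{b,a1} \<in> M' \<and> v \<in> {b,a1}" using True unfolding M'_def by blast
        fix g' assume g': "g' \<in> M' \<and> v \<in> g'"
        show "g' = {b,a1}"
        proof (rule ccontr)
          assume "g' \<noteq> {b,a1}"
          then have "g' \<in> N" using g' unfolding M'_def by blast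
          then have "a1 \<notin> g' \<and> b \<notin> g'" using Nf0 by blast
          then show False using g' True by blast
        qed
      qed
    next
      case False
      then have "\<exists>!g. g \<in> N \<and> v \<in> g" using Nu0 v by blast
      then obtain g where g: "g \<in> N" "v \<in> g" and gu: "\<And>g'. g' \<in> N \<Longrightarrow> v \<in> g' \<Longrightarrow> g' = g" by blast
      show ?thesis
      proof (rule ex1I[of _ g])
        show "g \<in> M' \<and> v \<in> g" using g unfolding M'_def by blast
        fix g' assume g': "g' \<in> M' \<and> v \<in> g'"
        then have "g' \<noteq> {b,a1}" using False by blast
        then have "g' \<in> N" using g' unfolding M'_def by blast
        then show "g' = g" using gu g' by blast
      qed
    qed
  qed
  have "{a2,b2} \<in> M'" using fN unfolding M'_def by blast
  then have eM': "{a1,b1} \<in> M'" using equiv[OF pm'] by simp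
  have "{a1,b1} \<notin> N" using Nf0 by blast
  then have "{a1,b1} = {b,a1}" using eM' unfolding M'_def by blast
  then have "b = b1 \<or> b = a1" by (auto simp: doubleton_eq_iff)
  moreover have "b \<noteq> a1" using bS SS_B a1A AB_disj by blast
  ultimately show False using bb1 by blast
qed

lemma card_NS2: "card (NS - {a2}) = card SS"
proof -
  have i1: "inj_on (mate M) (NS - {a2})" using mate_inj[OF pm] NS_A A_V by (auto intro: inj_on_subset)
  have i2: "inj_on (mate M) SS" using mate_inj[OF pm] SS_B B_V by (auto intro: inj_on_subset)
  have s1: "mate M ` (NS - {a2}) \<subseteq> SS"
  proof
    fix x assume "x \<in> mate M ` (NS - {a2})"
    then obtain a where a: "x = mate M a" "a \<in> NS" "a \<noteq> a2" by blast
    show "x \<in> SS"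
    proof (cases "a = a1")
      case True then show ?thesis using a m4 b1_SS by simp
    next
      case False
      obtain b where "b \<in> SS" "{b,a} \<in> E" using a(2) unfolding NS_def by blast
      then show ?thesis using SS_clo False a by blast
    qed
  qed
  have s2: "mate M ` SS \<subseteq> NS - {a2}"
  proof
    fix x assume "x \<in> mate M ` SS"
    then obtain b where b: "x = mate M b" "b \<in> SS" by blast
    have bV: "b \<in> V" using b SS_B B_V by blast
    have "{b, mate M b} \<in> E" using mate_props(6)[OF pm bV] .
    then have "mate M b \<in> NS" using b(2) unfolding NS_def by blast
    moreover have "mate M b \<noteq> a2"
    proof
      assume "mate M b = a2"
      then have "b = b2" using mate_props(3)[OF pm bV] m4 by metis
      then show False using b2_SS b by simp
    qed
    ultimately show "x \<in> NS - {a2}" using b by simp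
  qed
  show ?thesis using card_inj_on_le[OF i1 s1 finSS] card_inj_on_le[OF i2 s2] finNS by simp
qed

lemma a2_NS: "a2 \<in> NS"
proof (rule ccontr)
  assume a2n: "a2 \<notin> NS"
  then have cNS: "card NS = card SS" using card_NS2 by simp
  define W where "W = SS \<union> NS"
  have WV: "W \<subseteq> V" unfolding W_def using SS_B NS_A A_V B_V by blast
  have tightin: "b \<in> SS" if h: "{a,b} \<in> E" "a \<in> NS" for a b
  proof (rule ccontr)
    assume bS: "b \<notin> SS"
    obtain M' where M': "perfect_matching V E M'" "{a,b} \<in> M'" using mc h by (auto simp: matching_covered_def)
    have im: "mate M' ` SS \<subseteq> NS"
    proof
      fix x assume "x \<in> mate M' ` SS"
      then obtain b' where b': "x = mate M' b'" "b' \<in> SS" by blast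
      have "b' \<in> V" using b' SS_B B_V by blast
      then have "{b', mate M' b'} \<in> E" using mate_props(6)[OF M'(1)] by blast
      then show "x \<in> NS" using b' unfolding NS_def by blast
    qed
    have "mate M' ` SS = NS" using tight[OF M'(1) _ im finNS] cNS SS_B B_V by auto
    then obtain b' where b': "b' \<in> SS" "a = mate M' b'" using h(2) by blast
    have "b' \<in> V" using b' SS_B B_V by blast
    then have "mate M' a = b'" using mate_props(3)[OF M'(1)] b' by simp
    moreover have "mate M' a = b" using pm_mate_eq[OF M'(1) M'(2)] .
    ultimately show False using b' bS by simp
  qed
  have "crossing E W = {}"
  proof (rule ccontr)
    assume "crossing E W \<noteq> {}"
    then obtain h where "h \<in> crossing E W" by blast
    then obtain u w where uw: "h = {u,w}" "u \<in> W" "w \<notin> W" "h \<in> E" by (rule crossingD)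
    obtain a b where ab: "h = {a,b}" "a \<in> A" "b \<in> B" using edgeAB[OF uw(4)] by blast
    have aW: "a \<in> W \<longleftrightarrow> a \<in> NS" using ab(2) SS_B AB_disj unfolding W_def by blast
    have bW: "b \<in> W \<longleftrightarrow> b \<in> SS" using ab(3) NS_A AB_disj unfolding W_def by blast
    have "(u = a \<and> w = b) \<or> (u = b \<and> w = a)" using uw(1) ab(1) by (auto simp: doubleton_eq_iff)
    then show False
    proof
      assume "u = a \<and> w = b"
      then have "a \<in> NS" "b \<notin> SS" using uw aW bW by auto
      then show False using tightin uw(4) ab(1) by blast
    next
      assume "u = b \<and> w = a"
      then have "b \<in> SS" "a \<notin> NS" using uw aW bW by auto
      moreover have "{b,a} \<in> E" using uw(4) ab(1) by (simp add: insert_commute)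
      ultimately show False unfolding NS_def by blast
    qed
  qed
  moreover have "W \<noteq> {}" using b1_SS unfolding W_def by blast
  ultimately have "W = V" using closed_conn WV by blast
  then have "a2 \<in> W" using V4 by simp
  then show False using a2n a2A SS_B AB_disj unfolding W_def by blast
qed

lemma card_NS: "card NS = Suc (card SS)"
proof -
  have "card (NS - {a2}) = card NS - 1" using card_Diff_singleton[OF a2_NS] .
  moreover have "card NS > 0" using a2_NS finNS card_gt_0_iff by blast
  ultimately show ?thesis using card_NS2 by simp
qed

definition "ZZ = SS \<union> (NS - {a1})"

lemma ZZ_A: "ZZ \<inter> A = NS - {a1}" unfolding ZZ_def using SS_B NS_A AB_disj by blast
lemma ZZ_B: "ZZ \<inter> B = SS" unfolding ZZ_def using SS_B NS_A AB_disj by blast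
lemma ZZ_V: "ZZ \<subseteq> V" unfolding ZZ_def using SS_B NS_A A_V B_V by blast

lemma ZZ_cross: "crossing E ZZ = {{a1,b1}, {a2,b2}}"
proof
  show "{{a1,b1}, {a2,b2}} \<subseteq> crossing E ZZ"
  proof -
    have "b1 \<in> ZZ" "a1 \<notin> ZZ" "a2 \<in> ZZ" "b2 \<notin> ZZ"
      using b1_SS a12 a2_NS b2_SS b2B NS_A AB_disj a1A SS_B unfolding ZZ_def by blast+
    then show ?thesis unfolding crossing_def using eE fE by blast
  qed
  show "crossing E ZZ \<subseteq> {{a1,b1}, {a2,b2}}"
  proof
    fix h assume "h \<in> crossing E ZZ"
    then obtain u w where uw: "h = {u,w}" "u \<in> ZZ" "w \<notin> ZZ" "h \<in> E" by (rule crossingD)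
    obtain a b where ab: "h = {a,b}" "a \<in> A" "b \<in> B" using edgeAB[OF uw(4)] by blast
    have aZ: "a \<in> ZZ \<longleftrightarrow> a \<in> NS - {a1}" using ZZ_A ab(2) by blast
    have bZ: "b \<in> ZZ \<longleftrightarrow> b \<in> SS" using ZZ_B ab(3) by blast
    have "(u = a \<and> w = b) \<or> (u = b \<and> w = a)" using uw(1) ab(1) by (auto simp: doubleton_eq_iff)
    then show "h \<in> {{a1,b1}, {a2,b2}}"
    proof
      assume "u = b \<and> w = a"
      then have bS: "b \<in> SS" and aN: "a \<notin> NS - {a1}" using uw aZ bZ by auto
      have ba: "{b,a} \<in> E" using uw(4) ab(1) by (simp add: insert_commute)
      then have "a \<in> NS" using bS unfolding NS_def by blast
      then have "a = a1" using aN by blast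
      then have "b = b1" using F3 bS ba by blast
      then show ?thesis using ab(1) \<open>a = a1\<close> by simp
    next
      assume "u = a \<and> w = b"
      then have aN: "a \<in> NS" "a \<noteq> a1" and bS: "b \<notin> SS" using uw aZ bZ by auto
      show ?thesis
      proof (rule ccontr)
        assume hf: "h \<notin> {{a1,b1}, {a2,b2}}"
        obtain M' where M': "perfect_matching V E M'" "h \<in> M'" using mc uw(4) by (auto simp: matching_covered_def)
        define P where "P = mate M' ` SS"
        have PN: "P \<subseteq> NS"
        proof
          fix x assume "x \<in> P"
          then obtain b' where b': "x = mate M' b'" "b' \<in> SS" unfolding P_def by blast
          have "b' \<in> V" using b' SS_B B_V by blast
          then have "{b', mate M' b'} \<in> E" using mate_props(6)[OF M'(1)] by blast
          then show "x \<in> NS" using b' unfolding NS_def by blast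
        qed
        have cP: "card P = card SS"
        proof -
          have "inj_on (mate M') SS" using mate_inj[OF M'(1)] SS_B B_V by (auto intro: inj_on_subset)
          then show ?thesis unfolding P_def by (rule card_image)
        qed
        have mab: "mate M' a = b" using pm_mate_eq[OF M'(1)] M'(2) ab(1) by simp
        have Pinv: "mate M' x \<in> SS" if xP: "x \<in> P" for x
        proof -
          obtain b' where b': "x = mate M' b'" "b' \<in> SS" using xP unfolding P_def by blast
          have "b' \<in> V" using b' SS_B B_V by blast
          then show ?thesis using mate_props(3)[OF M'(1)] b' by simp
        qed
        have aP: "a \<notin> P" using Pinv mab bS by blast
        show False
        proof (cases "{a1,b1} \<in> M'")
          case True
          then have fM': "{a2,b2} \<in> M'" using equiv[OF M'(1)] by simp
          have "mate M' a2 = b2" using pm_mate_eq[OF M'(1) fM'] .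
          then have a2P: "a2 \<notin> P" using Pinv b2_SS by metis
          have "P \<subseteq> NS - {a2}" using PN a2P by blast
          then have "P = NS - {a2}" using card_subset_eq[of "NS - {a2}" P] finNS cP card_NS2 by simp
          then have "a = a2" using aP aN by blast
          then have "b = b2" using mab \<open>mate M' a2 = b2\<close> by simp
          then show False using hf ab(1) \<open>a = a2\<close> by simp
        next
          case False
          have a1P: "a1 \<notin> P"
          proof
            assume "a1 \<in> P"
            then obtain b' where b': "a1 = mate M' b'" "b' \<in> SS" unfolding P_def by blast
            have b'V: "b' \<in> V" using b' SS_B B_V by blast
            have "{b', a1} \<in> E" using mate_props(6)[OF M'(1) b'V] b' by simp
            then have "b' = b1" using F3 b'(2) by blast
            then have "{b1, a1} \<in> M'" using pm_mate[OF M'(1) b'V] b' by simp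
            then show False using False by (simp add: insert_commute)
          qed
          have Psub: "P \<subseteq> NS - {a, a1}" using PN aP a1P by blast
          have "card (NS - {a, a1}) = card NS - card {a, a1}"
            using card_Diff_subset[of "{a,a1}" NS] aN a1_NS finNS by simp
          also have "\<dots> = card NS - 2" using aN by simp
          finally have "card (NS - {a, a1}) = card SS - 1" using card_NS by simp
          moreover have "card P \<le> card (NS - {a, a1})" using card_mono[OF _ Psub] finNS by simp
          moreover have "card SS > 0" using b1_SS finSS card_gt_0_iff by blast
          ultimately show False using cP by simp
        qed
      qed
    qed
  qed
qed

lemma ZZ_bal: "balanced A B ZZ"
proof -
  have "card (NS - {a1}) = card NS - 1" using card_Diff_singleton[OF a1_NS] .
  then show ?thesis unfolding balanced_def ZZ_A ZZ_B using card_NS by simp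
qed

lemma co_bal: "balanced A B (V - ZZ)"
proof -
  have "(V - ZZ) \<inter> A = A - (ZZ \<inter> A)" "(V - ZZ) \<inter> B = B - (ZZ \<inter> B)" using A_V B_V by blast+
  moreover have "card (A - (ZZ \<inter> A)) = card A - card (ZZ \<inter> A)"
    using card_Diff_subset[of "ZZ \<inter> A" A] finA finite_subset by blast
  moreover have "card (B - (ZZ \<inter> B)) = card B - card (ZZ \<inter> B)"
    using card_Diff_subset[of "ZZ \<inter> B" B] finB finite_subset by blast
  moreover have "card (ZZ \<inter> A) = card (ZZ \<inter> B)" using ZZ_bal by (simp add: balanced_def)
  ultimately show ?thesis unfolding balanced_def using cardAB by simp
qed

lemma fwd_main: "\<exists>S X Y. two_edge_cut_sep V E S X Y \<and> balanced A B X \<and> balanced A B Y"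
proof -
  have Ve: "V \<noteq> {a1,b1}"
  proof
    assume "V = {a1,b1}"
    then have "a2 \<in> {a1,b1}" using V4 by simp
    then show False using a12 a2A b1B AB_disj by blast
  qed
  have Vf: "V \<noteq> {a2,b2}"
  proof
    assume "V = {a2,b2}"
    then have "a1 \<in> {a2,b2}" using V4 by simp
    then show False using a12 a1A b2B AB_disj by blast
  qed
  have b1Z: "b1 \<in> ZZ" using b1_SS unfolding ZZ_def by blast
  have a1Z: "a1 \<notin> ZZ" using a1A SS_B AB_disj unfolding ZZ_def by blast
  have "two_edge_cut_sep V E {{a1,b1},{a2,b2}} ZZ (V - ZZ)"
    using cut_from_Z[OF ZZ_V ZZ_cross ef b1Z _ V4(1) a1Z _ Ve Vf] by simp
  then show ?thesis using ZZ_bal co_bal by blast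
qed

end

theorem theorem5:
  fixes V A B :: "'a set" and E :: "'a set set"
  assumes "simple_graph V E"
    and "bipartite_with V E A B"
    and "matching_covered V E"
  shows "(\<exists>K. equivalent_class V E K) \<longleftrightarrow>
         (\<exists>S X Y. two_edge_cut_sep V E S X Y \<and> balanced A B X \<and> balanced A B Y)"
proof -
  interpret mcb V E A B using assms by unfold_locales
  show ?thesis
  proof
    assume "\<exists>K. equivalent_class V E K"
    then obtain K where K: "equivalent_class V E K" by blast
    have KE: "K \<subseteq> E" using K unfolding equivalent_class_def by (elim conjE)
    have cK: "card K \<ge> 2" using K unfolding equivalent_class_def by (elim conjE)
    have eqK: "\<forall>e\<in>K. \<forall>f\<in>K. equivalent_edges V E e f" using K unfolding equivalent_class_def by (elim conjE)
    have "K \<noteq> {}" using cK by auto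
    then obtain e where eK: "e \<in> K" by blast
    have "finite K" using cK card.infinite by fastforce
    then have "card (K - {e}) \<ge> 1" using cK eK by simp
    then have "K - {e} \<noteq> {}" by (metis card.empty not_one_le_zero)
    then obtain f where fK: "f \<in> K" and ef: "e \<noteq> f" by blast
    have eE: "e \<in> E" and fE: "f \<in> E" using eK fK KE by blast+
    have eqv: "\<And>M'. perfect_matching V E M' \<Longrightarrow> e \<in> M' \<longleftrightarrow> f \<in> M'"
      using eqK eK fK unfolding equivalent_edges_def by blast
    obtain M where pm: "perfect_matching V E M" and eM: "e \<in> M"
      using mc eE unfolding matching_covered_def by blast
    have fM: "f \<in> M" using eqv[OF pm] eM by simp
    obtain a1 b1 where e: "e = {a1,b1}" "a1 \<in> A" "b1 \<in> B" using edgeAB[OF eE] by blast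
    obtain a2 b2 where f: "f = {a2,b2}" "a2 \<in> A" "b2 \<in> B" using edgeAB[OF fE] by blast
    have a12: "a1 \<noteq> a2"
    proof
      assume "a1 = a2"
      then have "e = f" using pm_unique[OF pm _ eM _ fM] e f A_V by blast
      then show False using ef by simp
    qed
    have eqv': "\<And>M'. perfect_matching V E M' \<Longrightarrow> {a1,b1} \<in> M' \<longleftrightarrow> {a2,b2} \<in> M'"
      using eqv e f by simp
    interpret F: fwd V E A B M a1 b1 a2 b2
      by unfold_locales (use pm eM fM e f a12 eqv' in simp_all)
    show "\<exists>S X Y. two_edge_cut_sep V E S X Y \<and> balanced A B X \<and> balanced A B Y"
      by (rule F.fwd_main)
  next
    assume "\<exists>S X Y. two_edge_cut_sep V E S X Y \<and> balanced A B X \<and> balanced A B Y"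
    then obtain S X Y where "two_edge_cut_sep V E S X Y" "balanced A B X" by blast
    then show "\<exists>K. equivalent_class V E K" by (rule cut_equiv)
  qed
qed

end
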